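(* For any values of $k$ and $\mu$, \[ \,_{2}\tilde{F}_{3}\left(\tfrac{1}{2},\tfrac{1}{2};1,1-\mu,\mu+1;-k^{2}\right)=\sum_{L=0}^{\infty}\frac{(-1)^{2L}k^{4L}\Gamma(2L+1)^{2}2^{-8L}\left(2-\delta_{L0}\right)}{(L!)^{2}} \,_{1}\tilde{F}_{2}\left(L+\tfrac{1}{2};2L+1,L+\mu+1;-\tfrac{k^{2}}{4}\right)\,_{1}\tilde{F}_{2}\left(L+\tfrac{1}{2};2L+1,L-\mu+1;-\tfrac{k^{2}}{4}\right). \]
   Context: $\,_{p}F_{q}(a_1,\dots,a_p;b_1,\dots,b_q;z)=\sum_{n\ge0}\frac{(a_1)_n\cdots(a_p)_n}{(b_1)_n\cdots(b_q)_n}\frac{z^n}{n!}$ is the generalized hypergeometric function, with $(c)_n=\Gamma(c+n)/\Gamma(c)$. The regularized hypergeometric function is $\,_{p}\tilde{F}_{q}(a_1,\dots,a_p;b_1,\dots,b_q;z)=\,_{p}F_{q}(a_1,\dots,a_p;b_1,\dots,b_q;z)/(\Gamma(b_1)\cdots\Gamma(b_q))$ (understood by continuity, as an entire function of the $b_j$, when some $b_j$ is a nonpositive integer). $\delta_{L0}$ is the Kronecker delta. *)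

theory Defs
  imports "HOL-Analysis.Analysis" "HOL-Analysis.Gamma_Function"
begin

text \<open>Since (b)_n * Gamma(b) = Gamma(b+n), we have 1/((b)_n Gamma(b)) = 1/Gamma(b+n),
  and using the entire reciprocal Gamma function rGamma this is the continuous
  (entire in b) extension, valid also for b a nonpositive integer.\<close>
definition hyper_reg :: "complex list \<Rightarrow> complex list \<Rightarrow> complex \<Rightarrow> complex" where
  "hyper_reg as bs z =
     (\<Sum>n. (\<Prod>a\<leftarrow>as. pochhammer a n) * (\<Prod>b\<leftarrow>bs. rGamma (b + of_nat n))
           * z ^ n / fact n)"

end

theory Submission
  imports Defs
begin

lemma symvand:
  fixes p q :: nat
  shows "(\<Sum>L\<le>p+q. (if L = 0 then 1 else 2) * ((2*p) choose (p+L)) * ((2*q) choose (q+L)))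
         = (2*p+2*q) choose (p+q)"
proof -
  define g where "g L = ((2*p) choose (p+L)) * ((2*q) choose (q+L))" for L
  define h where "h k = ((2*p) choose k) * ((2*q) choose (p+q-k))" for k
  have V: "(\<Sum>k\<le>p+q. h k) = (2*p+2*q) choose (p+q)"
    unfolding h_def using vandermonde[of "2*p" "2*q" "p+q"] by simp
  have gz: "g L = 0" if "L > p \<or> L > q" for L
    using that unfolding g_def by auto
  have split: "{..p+q} = {..<p} \<union> {p..p+q}" by auto
  have s1: "(\<Sum>k\<in>{p..p+q}. h k) = (\<Sum>L\<le>q. g L)"
  proof -
    have "(\<Sum>k\<in>{p..p+q}. h k) = (\<Sum>L\<le>q. h (p+L))"
      by (rule sum.reindex_bij_witness[of _ "\<lambda>L. p+L" "\<lambda>k. k - p"]) auto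
    also have "\<dots> = (\<Sum>L\<le>q. g L)"
    proof (rule sum.cong)
      fix L assume "L \<in> {..q}"
      then have "(2*q) choose (q - L) = (2*q) choose (q+L)"
        using binomial_symmetric[of "q-L" "2*q"] by auto
      then show "h (p+L) = g L" unfolding h_def g_def by simp
    qed simp
    finally show ?thesis .
  qed
  have s2: "(\<Sum>k\<in>{..<p}. h k) = (\<Sum>L\<in>{1..p}. g L)"
  proof -
    have "(\<Sum>k\<in>{..<p}. h k) = (\<Sum>L\<in>{1..p}. h (p-L))"
      by (rule sum.reindex_bij_witness[of _ "\<lambda>k. p - k" "\<lambda>L. p-L"]) auto
    also have "\<dots> = (\<Sum>L\<in>{1..p}. g L)"
    proof (rule sum.cong)
      fix L assume "L \<in> {1..p}"
      then have "(2*p) choose (p - L) = (2*p) choose (p+L)"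
        using binomial_symmetric[of "p-L" "2*p"] by auto
      moreover have "p + q - (p - L) = q + L" using \<open>L \<in> {1..p}\<close> by auto
      ultimately show "h (p-L) = g L" unfolding h_def g_def by simp
    qed simp
    finally show ?thesis .
  qed
  have e1: "(\<Sum>L\<le>q. g L) = (\<Sum>L\<le>p+q. g L)"
    by (rule sum.mono_neutral_left) (auto simp: gz)
  have e2: "(\<Sum>L\<in>{1..p}. g L) = (\<Sum>L\<in>{1..p+q}. g L)"
    by (rule sum.mono_neutral_left) (auto simp: gz)
  have e3: "(\<Sum>L\<le>p+q. g L) = g 0 + (\<Sum>L\<in>{1..p+q}. g L)"
  proof -
    have "{..p+q} = insert 0 {1..p+q}" by auto
    then show ?thesis by simp
  qed
  have e4: "(\<Sum>L\<le>p+q. (if L = 0 then 1 else 2) * g L) = g 0 + 2 * (\<Sum>L\<in>{1..p+q}. g L)"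
  proof -
    have "{..p+q} = insert 0 {1..p+q}" by auto
    then have "(\<Sum>L\<le>p+q. (if L = 0 then 1 else 2) * g L) = g 0 + (\<Sum>L\<in>{1..p+q}. (if L = 0 then 1 else 2) * g L)"
      by simp
    also have "(\<Sum>L\<in>{1..p+q}. (if L = 0 then 1 else 2) * g L) = (\<Sum>L\<in>{1..p+q}. 2 * g L)"
      by (rule sum.cong) auto
    finally show ?thesis by (simp add: sum_distrib_left)
  qed
  have "(\<Sum>k\<le>p+q. h k) = (\<Sum>k\<in>{..<p}. h k) + (\<Sum>k\<in>{p..p+q}. h k)"
    unfolding split by (rule sum.union_disjoint) auto
  then have "(2*p+2*q) choose (p+q) = g 0 + 2 * (\<Sum>L\<in>{1..p+q}. g L)"
    using V s1 s2 e1 e2 e3 by simp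
  then show ?thesis using e4 unfolding g_def by (simp add: mult.assoc)
qed


lemma rG_shift:
  fixes c :: complex
  assumes "p \<le> N"
  shows "rGamma (of_nat p + 1 + c) = (-1)^(N-p) * pochhammer (- (of_nat N + c)) (N-p) * rGamma (of_nat N + 1 + c)"
proof -
  have "rGamma (of_nat p + 1 + c) = pochhammer (of_nat p + 1 + c) (N-p) * rGamma (of_nat p + 1 + c + of_nat (N-p))"
    by (rule pochhammer_rGamma)
  moreover have "of_nat p + 1 + c + of_nat (N-p) = of_nat N + 1 + c"
    using assms by (simp add: of_nat_diff)
  moreover have "pochhammer (of_nat p + 1 + c) (N-p) = (-1)^(N-p) * pochhammer (- (of_nat N + c)) (N-p)"
  proof -
    have eq: "(of_nat N + c) - of_nat (N-p) + 1 = of_nat p + 1 + c"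
      using assms by (simp add: of_nat_diff)
    show ?thesis using pochhammer_minus'[of "of_nat N + c" "N-p"] unfolding eq by simp
  qed
  ultimately show ?thesis by simp
qed

lemma vandB:
  fixes \<mu> :: complex
  shows "(\<Sum>p\<le>N. rGamma (of_nat p + 1 + \<mu>) * rGamma (of_nat (N-p) + 1 + (-\<mu>)) / (fact p * fact (N-p)))
       = of_nat ((2*N) choose N) * rGamma (of_nat N + 1 + \<mu>) * rGamma (of_nat N + 1 + (-\<mu>))"
proof -
  define a where "a = - (of_nat N + (-\<mu>) :: complex)"
  define b where "b = - (of_nat N + \<mu> :: complex)"
  define R where "R = rGamma (of_nat N + 1 + \<mu>) * rGamma (of_nat N + 1 + (-\<mu>))"
  have "(\<Sum>p\<le>N. rGamma (of_nat p + 1 + \<mu>) * rGamma (of_nat (N-p) + 1 + (-\<mu>)) / (fact p * fact (N-p)))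
      = (\<Sum>p\<le>N. R * (-1)^N / fact N * (of_nat (N choose p) * pochhammer a p * pochhammer b (N-p)))"
  proof (rule sum.cong)
    fix p assume p: "p \<in> {..N}"
    then have pN: "p \<le> N" by simp
    have e1: "rGamma (of_nat p + 1 + \<mu>) = (-1)^(N-p) * pochhammer b (N-p) * rGamma (of_nat N + 1 + \<mu>)"
      unfolding b_def by (rule rG_shift[OF pN])
    have e2: "rGamma (of_nat (N-p) + 1 + (-\<mu>)) = (-1)^(N-(N-p)) * pochhammer a (N-(N-p)) * rGamma (of_nat N + 1 + (-\<mu>))"
      unfolding a_def by (rule rG_shift) simp
    have e3: "N - (N-p) = p" using pN by simp
    have e4: "(-1::complex)^(N-p) * (-1)^p = (-1)^N"
      using pN by (simp flip: power_add)
    have e5: "(of_nat (N choose p) :: complex) = fact N / (fact p * fact (N-p))"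
      by (rule binomial_fact[OF pN])
    show "rGamma (of_nat p + 1 + \<mu>) * rGamma (of_nat (N-p) + 1 + (-\<mu>)) / (fact p * fact (N-p))
      = R * (-1)^N / fact N * (of_nat (N choose p) * pochhammer a p * pochhammer b (N-p))"
      unfolding e1 e2 e3 e5 R_def e4[symmetric] by (simp add: field_simps)
  qed simp
  also have "\<dots> = R * (-1)^N / fact N * pochhammer (a+b) N"
    by (simp add: pochhammer_binomial_sum sum_distrib_left)
  also have "a + b = - of_nat (2*N)" unfolding a_def b_def by simp
  also have "pochhammer (- of_nat (2*N) :: complex) N = (-1)^N * pochhammer (of_nat N + 1) N"
  proof -
    have "of_nat (2*N) - of_nat N + 1 = (of_nat N + 1 :: complex)" by simp
    then show ?thesis using pochhammer_minus[of "of_nat (2*N) :: complex" N] by simp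
  qed
  also have "pochhammer (of_nat N + 1 :: complex) N = fact (2*N) / fact N"
  proof -
    have "pochhammer (1::complex) (N + N) = pochhammer 1 N * pochhammer (1 + of_nat N) N"
      by (rule pochhammer_product')
    then have "fact (2*N) = (fact N :: complex) * pochhammer (of_nat N + 1) N"
      by (simp add: pochhammer_fact mult_2 add.commute)
    then show ?thesis by (simp add: field_simps)
  qed
  finally have X: "(\<Sum>p\<le>N. rGamma (of_nat p + 1 + \<mu>) * rGamma (of_nat (N-p) + 1 + (-\<mu>)) / (fact p * fact (N-p)))
     = R * (-1)^N / fact N * ((-1)^N * (fact (2*N) / fact N))" .
  have C: "(of_nat ((2*N) choose N) :: complex) = fact (2*N) / (fact N * fact N)"
    using binomial_fact[of N "2*N", where 'a=complex] by (simp add: mult_2)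
  have m1: "(-1::complex)^N * (-1)^N = 1" by (simp flip: power_add)
  have "R * (-1)^N / fact N * ((-1)^N * (fact (2*N) / fact N)) = R * ((-1)^N * (-1)^N) * (fact (2*N) / (fact N * fact N))"
    by (simp add: field_simps)
  then show ?thesis unfolding X m1 C R_def by simp
qed


lemma poch_half_bound:
  "norm (pochhammer (of_nat L + 1/2 :: complex) m) \<le> fact (L+m)"
proof (induction m)
  case 0 then show ?case by simp
next
  case (Suc m)
  have n: "norm (of_nat L + 1/2 + of_nat m :: complex) \<le> of_nat (L + m) + 1"
  proof -
    have "(of_nat L + 1/2 + of_nat m :: complex) = of_real (real (L+m) + 1/2)" by simp
    then have "norm (of_nat L + 1/2 + of_nat m :: complex) = real (L+m) + 1/2"
      by (simp only: norm_of_real; simp)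
    then show ?thesis by simp
  qed
  have "norm (pochhammer (of_nat L + 1/2 :: complex) (Suc m))
      = norm (pochhammer (of_nat L + 1/2 :: complex) m) * norm (of_nat L + 1/2 + of_nat m :: complex)"
    by (simp add: pochhammer_Suc norm_mult)
  also have "\<dots> \<le> fact (L+m) * (of_nat (L + m) + 1)"
    by (rule mult_mono[OF Suc.IH n]) auto
  also have "\<dots> = fact (L + Suc m)" by (simp add: algebra_simps)
  finally show ?case .
qed

lemma norm_poch_ge1:
  fixes c :: complex
  assumes "real K \<ge> norm c + 1"
  shows "norm (pochhammer (of_nat K + c) j) \<ge> 1"
proof (induction j)
  case 0 then show ?case by simp
next
  case (Suc j)
  have "norm (of_nat K + c + of_nat j) \<ge> 1"
  proof -
    have "norm (of_nat (K + j) + c :: complex) \<ge> norm (of_nat (K+j) :: complex) - norm c"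
      by (metis norm_diff_ineq)
    moreover have "norm (of_nat (K+j) :: complex) = real (K+j)" by (simp only: norm_of_nat)
    ultimately show ?thesis using assms by (simp add: add_ac)
  qed
  then have "1 * 1 \<le> norm (pochhammer (of_nat K + c) j) * norm (of_nat K + c + of_nat j)"
    using Suc.IH by (intro mult_mono) auto
  then show ?case by (simp add: pochhammer_Suc norm_mult)
qed

lemma rG_bounded:
  fixes c :: complex
  shows "\<exists>M. \<forall>n. norm (rGamma (of_nat n + c)) \<le> M"
proof -
  obtain K :: nat where K: "real K \<ge> norm c + 1" using real_arch_simple by blast
  define M where "M = Max ((\<lambda>n. norm (rGamma (of_nat n + c))) ` {..K})"
  have le: "norm (rGamma (of_nat n + c)) \<le> M" if "n \<le> K" for n
    unfolding M_def using that by (intro Max_ge) auto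
  have "norm (rGamma (of_nat n + c)) \<le> M" for n
  proof (cases "n \<le> K")
    case True then show ?thesis by (rule le)
  next
    case False
    have "rGamma (of_nat K + c) = pochhammer (of_nat K + c) (n-K) * rGamma (of_nat K + c + of_nat (n-K))"
      by (rule pochhammer_rGamma)
    moreover have "of_nat K + c + of_nat (n-K) = of_nat n + c" using False by (simp add: of_nat_diff)
    ultimately have "norm (rGamma (of_nat K + c)) = norm (pochhammer (of_nat K + c) (n-K)) * norm (rGamma (of_nat n + c))"
      by (simp add: norm_mult)
    moreover have "norm (pochhammer (of_nat K + c) (n-K)) \<ge> 1" by (rule norm_poch_ge1[OF K])
    ultimately have "1 * norm (rGamma (of_nat n + c)) \<le> norm (rGamma (of_nat K + c))"
      using mult_right_mono[of 1 "norm (pochhammer (of_nat K + c) (n-K))" "norm (rGamma (of_nat n + c))"]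
      by simp
    then have "norm (rGamma (of_nat n + c)) \<le> norm (rGamma (of_nat K + c))" by simp
    also have "\<dots> \<le> M" by (rule le) simp
    finally show ?thesis .
  qed
  then show ?thesis by blast
qed

lemma fact_sq:
  assumes "L \<le> p"
  shows "fact p * fact p \<le> (fact (p+L) * fact (p-L) :: nat)"
  using assms
proof (induction L)
  case 0 then show ?case by simp
next
  case (Suc L)
  then have IH: "fact p * fact p \<le> (fact (p+L) * fact (p-L) :: nat)" by simp
  have pl: "p - L = Suc (p - Suc L)" using Suc.prems by simp
  have "fact (p+L) * fact (p-L) = fact (p+L) * fact (p - Suc L) * (p - L)"
    unfolding pl by (simp add: algebra_simps)
  also have "\<dots> \<le> fact (p+L) * fact (p - Suc L) * (p + Suc L)"
    by (intro mult_left_mono) auto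
  also have "\<dots> = fact (p + Suc L) * fact (p - Suc L)"
    by (simp add: algebra_simps)
  finally show ?case using IH by linarith
qed

lemma prod_summable:
  fixes a :: "'a \<Rightarrow> real" and b :: "'b \<Rightarrow> real"
  assumes "\<And>x. a x \<ge> 0" "\<And>y. b y \<ge> 0" "a summable_on A" "b summable_on B"
  shows "(\<lambda>(x,y). a x * b y) summable_on A \<times> B"
proof -
  have "(\<lambda>xy. (\<lambda>(x,y). a x * b y) xy) summable_on Sigma A (\<lambda>_. B)"
  proof (rule summable_on_SigmaI[where g = "\<lambda>x. a x * infsum b B"])
    fix x assume "x \<in> A"
    show "((\<lambda>y. (\<lambda>(x,y). a x * b y) (x, y)) has_sum a x * infsum b B) B"
      using has_sum_cmult_right[OF has_sum_infsum[OF assms(4)]] by simp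
  next
    show "(\<lambda>x. a x * infsum b B) summable_on A"
      using summable_on_cmult_left[OF assms(3)] by simp
  next
    fix x y show "0 \<le> (\<lambda>(x,y). a x * b y) (x, y)" using assms by simp
  qed
  then show ?thesis by simp
qed


definition Pf :: "complex \<Rightarrow> complex \<Rightarrow> nat \<Rightarrow> complex" where
  "Pf z \<nu> p = pochhammer (1/2) p * rGamma (of_nat p + 1 + \<nu>) * z ^ p"

definition Dc :: "nat \<Rightarrow> nat \<Rightarrow> nat \<Rightarrow> complex" where
  "Dc L p q = (if L \<le> p \<and> L \<le> q then (if L = 0 then 1 else 2) / (fact (p+L) * fact (q+L) * fact (p-L) * fact (q-L)) else 0)"

definition Tf :: "complex \<Rightarrow> complex \<Rightarrow> nat \<times> nat \<times> nat \<Rightarrow> complex" where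
  "Tf z \<mu> x = (case x of (L,p,q) \<Rightarrow> Dc L p q * Pf z \<mu> p * Pf z (-\<mu>) q)"

lemma fact2: "fact (2*p) = (4::complex)^p * pochhammer (1/2) p * fact p"
proof -
  have "pochhammer (2 * (1/2::complex)) (2*p) = of_nat (2^(2*p)) * pochhammer (1/2) p * pochhammer (1/2 + 1/2) p"
    by (rule pochhammer_double)
  then show ?thesis by (simp add: pochhammer_fact power_mult)
qed

lemma Pf_bound:
  assumes "L \<le> p" "\<forall>n. norm (rGamma (of_nat n + (1+\<nu>))) \<le> M"
  shows "norm (Pf z \<nu> p) / (fact (p+L) * fact (p-L)) \<le> M * norm z ^ p / fact p"
proof -
  have M0: "0 \<le> M" using assms(2) norm_ge_zero order_trans by blast
  have r1: "norm (rGamma (of_nat p + 1 + \<nu>)) \<le> M" using assms(2) by (simp add: add.assoc)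
  have "norm (Pf z \<nu> p) = norm (pochhammer (1/2::complex) p) * norm (rGamma (of_nat p + 1 + \<nu>)) * norm z ^ p"
    by (simp add: Pf_def norm_mult norm_power)
  also have "\<dots> \<le> fact p * M * norm z ^ p"
    using poch_half_bound[of 0 p] r1 by (intro mult_mono mult_right_mono) auto
  finally have A: "norm (Pf z \<nu> p) \<le> fact p * M * norm z ^ p" .
  have fs: "(fact p * fact p :: real) \<le> fact (p+L) * fact (p-L)"
  proof -
    have "real (fact p * fact p) \<le> real (fact (p+L) * fact (p-L))"
      using fact_sq[OF assms(1)] by (simp only: of_nat_le_iff)
    then show ?thesis by (simp only: of_nat_mult of_nat_fact)
  qed
  have pos: "(0::real) < fact (p+L) * fact (p-L)" by simp
  have "norm (Pf z \<nu> p) / (fact (p+L) * fact (p-L)) \<le> fact p * M * norm z ^ p / (fact (p+L) * fact (p-L))"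
    using A pos by (simp add: divide_right_mono)
  also have "\<dots> \<le> M * norm z ^ p / fact p"
  proof -
    have m: "fact p * fact p * (M * norm z ^ p) \<le> fact (p+L) * fact (p-L) * (M * norm z ^ p)"
      using fs M0 by (intro mult_right_mono) auto
    have "fact p * M * norm z ^ p / (fact (p+L) * fact (p-L)) = fact p * fact p * (M * norm z ^ p) / (fact p * (fact (p+L) * fact (p-L)))"
      by (simp add: field_simps)
    also have "\<dots> \<le> fact (p+L) * fact (p-L) * (M * norm z ^ p) / (fact p * (fact (p+L) * fact (p-L)))"
      using m pos by (intro divide_right_mono) auto
    also have "\<dots> = M * norm z ^ p / fact p"
      by (simp add: field_simps)
    finally show ?thesis .
  qed
  finally show ?thesis .
qed

lemma T_bound:
  assumes M1: "\<forall>n. norm (rGamma (of_nat n + (1+\<mu>))) \<le> M1"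
      and M2: "\<forall>n. norm (rGamma (of_nat n + (1+(-\<mu>)))) \<le> M2"
  shows "norm (Tf z \<mu> (L,p,q)) \<le> 2*M1*M2 * ((1/2)^L * ((2*norm z)^p / fact p * (norm z^q / fact q)))"
proof -
  have M10: "0 \<le> M1" using M1 norm_ge_zero order_trans by blast
  have M20: "0 \<le> M2" using M2 norm_ge_zero order_trans by blast
  have rhs0: "0 \<le> 2*M1*M2 * ((1/2)^L * ((2*norm z)^p / fact p * (norm z^q / fact q)))"
    using M10 M20 by simp
  show ?thesis
  proof (cases "L \<le> p \<and> L \<le> q")
    case False
    then have "Dc L p q = 0" by (auto simp: Dc_def)
    then show ?thesis using rhs0 by (simp add: Tf_def)
  next
    case True
    define c :: real where "c = (if L = 0 then 1 else 2)"
    have c2: "c \<le> 2" "0 \<le> c" unfolding c_def by auto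
    have "norm (Tf z \<mu> (L,p,q)) = c * (norm (Pf z \<mu> p) / (fact (p+L) * fact (p-L))) * (norm (Pf z (-\<mu>) q) / (fact (q+L) * fact (q-L)))"
      using True by (simp add: Tf_def Dc_def c_def norm_mult norm_divide)
    also have "\<dots> \<le> 2 * (M1 * norm z ^ p / fact p) * (M2 * norm z ^ q / fact q)"
      using Pf_bound[of L p \<mu> M1 z] Pf_bound[of L q "-\<mu>" M2 z] True M1 M2 c2 M10 M20
      by (intro mult_mono) auto
    also have "\<dots> \<le> 2*M1*M2 * ((1/2)^L * ((2*norm z)^p / fact p * (norm z^q / fact q)))"
    proof -
      have "(1::real) \<le> (1/2)^L * 2^p"
      proof -
        have "(1/2::real)^L * 2^p = 2^(p-L)" using True
          by (simp add: power_diff field_simps)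
        then show ?thesis by simp
      qed
      moreover have "0 \<le> 2*M1*M2 * (norm z ^ p / fact p * (norm z^q / fact q))" using M10 M20 by simp
      ultimately have "2*M1*M2 * (norm z ^ p / fact p * (norm z^q / fact q)) * 1
          \<le> 2*M1*M2 * (norm z ^ p / fact p * (norm z^q / fact q)) * ((1/2)^L * 2^p)"
        by (intro mult_left_mono) auto
      then show ?thesis by (simp add: power_mult_distrib field_simps)
    qed
    finally show ?thesis .
  qed
qed

lemma geo_summable_on: "(\<lambda>n::nat. (1/2::real)^n) summable_on UNIV"
  by (subst summable_on_UNIV_nonneg_real_iff) (auto intro: summable_geometric)

lemma exp_summable_on: "(\<lambda>n::nat. (r::real)^n / fact n) summable_on UNIV" if "r \<ge> 0"
proof -
  have "summable (\<lambda>n. inverse (fact n) * r^n)" by (rule summable_exp)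
  then have "summable (\<lambda>n::nat. r^n / fact n)" by (simp add: field_simps)
  then show ?thesis using that by (subst summable_on_UNIV_nonneg_real_iff) auto
qed

lemma T_summable: "Tf z \<mu> summable_on UNIV"
proof -
  obtain M1 where M1: "\<forall>n. norm (rGamma (of_nat n + (1+\<mu>))) \<le> M1" using rG_bounded by blast
  obtain M2 where M2: "\<forall>n. norm (rGamma (of_nat n + (1+(-\<mu>)))) \<le> M2" using rG_bounded by blast
  define r where "r = norm z"
  have r0: "r \<ge> 0" unfolding r_def by simp
  have s1: "(\<lambda>(p,q). (2*r)^p / fact p * (r^q / fact q)) summable_on (UNIV \<times> UNIV)"
  proof -
    have e1: "(\<lambda>n::nat. (2*r)^n / fact n) summable_on UNIV" using r0 by (intro exp_summable_on) simp
    have e2: "(\<lambda>n::nat. r^n / fact n) summable_on UNIV" using r0 by (intro exp_summable_on) simp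
    show ?thesis by (rule prod_summable[OF _ _ e1 e2]) (use r0 in auto)
  qed
  have s2: "(\<lambda>(L,pq). (1/2)^L * (\<lambda>(p,q). (2*r)^p / fact p * (r^q / fact q)) pq) summable_on (UNIV \<times> UNIV)"
    by (rule prod_summable) (use r0 geo_summable_on s1 in \<open>auto split: prod.splits\<close>)
  have s3: "(\<lambda>x. 2*M1*M2 * (case x of (L,p,q) \<Rightarrow> (1/2)^L * ((2*r)^p / fact p * (r^q / fact q)))) summable_on UNIV"
    using summable_on_cmult_right[OF s2, of "2*M1*M2"] by (simp add: case_prod_unfold)
  have "(\<lambda>x. norm (Tf z \<mu> x)) summable_on UNIV"
  proof (rule summable_on_comparison_test[OF s3])
    fix x :: "nat \<times> nat \<times> nat"
    obtain L p q where x: "x = (L,p,q)" by (cases x) auto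
    show "norm (Tf z \<mu> x) \<le> 2*M1*M2 * (case x of (L,p,q) \<Rightarrow> (1/2)^L * ((2*r)^p / fact p * (r^q / fact q)))"
      unfolding x r_def using T_bound[OF M1 M2] by simp
  next
    fix x :: "nat \<times> nat \<times> nat"
    show "0 \<le> norm (Tf z \<mu> x)" by (rule norm_ge_zero)
  qed
  then show ?thesis by (rule Infinite_Sum.abs_summable_summable)
qed


lemma Dc_sum:
  "(\<Sum>L\<le>p+q. Dc L p q) = of_nat ((2*p+2*q) choose (p+q)) / (fact (2*p) * fact (2*q))"
proof -
  have each: "Dc L p q = of_nat ((if L = 0 then 1 else 2) * ((2*p) choose (p+L)) * ((2*q) choose (q+L))) / (fact (2*p) * fact (2*q))" for L
  proof (cases "L \<le> p \<and> L \<le> q")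
    case True
    have b1: "(of_nat ((2*p) choose (p+L)) :: complex) = fact (2*p) / (fact (p+L) * fact (p-L))"
      using binomial_fact[of "p+L" "2*p", where 'a=complex] True by (simp add: mult_2)
    have b2: "(of_nat ((2*q) choose (q+L)) :: complex) = fact (2*q) / (fact (q+L) * fact (q-L))"
      using binomial_fact[of "q+L" "2*q", where 'a=complex] True by (simp add: mult_2)
    have c: "(of_nat (if L = 0 then 1 else 2 :: nat) :: complex) = (if L = 0 then 1 else 2)" by simp
    show ?thesis using True unfolding Dc_def of_nat_mult b1 b2 c by (simp add: field_simps)
  next
    case False
    then have z: "(if L = 0 then 1 else 2) * ((2*p) choose (p+L)) * ((2*q) choose (q+L)) = 0" by auto
    have "Dc L p q = 0" using False by (auto simp: Dc_def)
    then show ?thesis by (simp only: z) simp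
  qed
  have "(\<Sum>L\<le>p+q. Dc L p q) = (\<Sum>L\<le>p+q. of_nat ((if L = 0 then 1 else 2) * ((2*p) choose (p+L)) * ((2*q) choose (q+L))) / (fact (2*p) * fact (2*q) :: complex))"
    using each by simp
  also have "\<dots> = of_nat (\<Sum>L\<le>p+q. (if L = 0 then 1 else 2) * ((2*p) choose (p+L)) * ((2*q) choose (q+L))) / (fact (2*p) * fact (2*q))"
    by (simp only: sum_divide_distrib of_nat_sum)
  also have "\<dots> = of_nat ((2*p+2*q) choose (p+q)) / (fact (2*p) * fact (2*q))"
    by (simp only: symvand)
  finally show ?thesis .
qed

lemma rG_nat: "rGamma (of_nat n + 1 :: complex) = inverse (fact n)"
  using Gamma_fact[of n, where 'a=complex] by (simp add: rGamma_inverse_Gamma add.commute)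

lemma a_norm_summable:
  fixes z c b :: complex
  assumes "\<forall>n. norm (rGamma (of_nat n + c)) \<le> M" and "b = of_nat L + c"
  shows "(\<lambda>m. norm (pochhammer (of_nat L + 1/2) m * rGamma (of_nat (2*L) + 1 + of_nat m) * rGamma (b + of_nat m) * z^m / fact m)) summable_on UNIV"
proof -
  have M0: "0 \<le> M" using assms(1) norm_ge_zero order_trans by blast
  have s: "(\<lambda>m::nat. M * (norm z ^ m / fact m)) summable_on UNIV"
    by (rule summable_on_cmult_right) (rule exp_summable_on, simp)
  show ?thesis
  proof (rule summable_on_comparison_test[OF s])
    fix m :: nat
    have g: "rGamma (of_nat (2*L) + 1 + of_nat m :: complex) = inverse (fact (2*L+m))"
      using rG_nat[of "2*L+m"] by (simp add: add_ac)
    have bm: "b + of_nat m = of_nat (L+m) + c" using assms(2) by (simp add: add_ac)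
    have p1: "norm (pochhammer (of_nat L + 1/2 :: complex) m) * norm (rGamma (of_nat (2*L) + 1 + of_nat m :: complex)) \<le> 1"
    proof -
      have pb: "norm (pochhammer (of_nat L + 1/2 :: complex) m) \<le> fact (2*L+m)"
        using poch_half_bound[of L m] fact_mono[of "L+m" "2*L+m"] by (smt (verit) of_nat_fact le_add2 add_le_mono1 mult_2)
      have Rg: "norm (rGamma (of_nat (2*L) + 1 + of_nat m :: complex)) = 1 / fact (2*L+m)"
        unfolding g by (simp add: norm_inverse divide_inverse)
      have "norm (pochhammer (of_nat L + 1/2 :: complex) m) * (1 / fact (2*L+m)) \<le> fact (2*L+m) * (1 / fact (2*L+m))"
        by (rule mult_right_mono[OF pb]) simp
      then show ?thesis unfolding Rg by simp
    qed
    have p2: "norm (rGamma (b + of_nat m)) \<le> M" unfolding bm using assms(1) by blast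
    have "norm (pochhammer (of_nat L + 1/2) m * rGamma (of_nat (2*L) + 1 + of_nat m) * rGamma (b + of_nat m) * z^m / fact m)
        = (norm (pochhammer (of_nat L + 1/2 :: complex) m) * norm (rGamma (of_nat (2*L) + 1 + of_nat m :: complex))) * norm (rGamma (b + of_nat m)) * (norm z ^ m / fact m)"
      by (simp add: norm_mult norm_divide norm_power)
    also have "\<dots> \<le> 1 * M * (norm z ^ m / fact m)"
      using p1 p2 M0 by (intro mult_mono) auto
    finally show "norm (pochhammer (of_nat L + 1/2) m * rGamma (of_nat (2*L) + 1 + of_nat m) * rGamma (b + of_nat m) * z^m / fact m) \<le> M * (norm z ^ m / fact m)"
      by simp
  qed simp
qed


lemma key_alg:
  fixes k \<mu> z :: complex
  assumes zdef: "z = -(k^2)/4"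
  shows "(-1) ^ (2*L) * k ^ (4*L) * (Gamma (of_nat (2*L + 1))) ^ 2 * (1 / 2 ^ (8*L)) * (2 - (if L = 0 then 1 else 0)) / (fact L) ^ 2
     * ((pochhammer (of_nat L + 1/2) m * rGamma (of_nat (2*L) + 1 + of_nat m) * rGamma ((of_nat L + \<mu> + 1) + of_nat m) * z^m / fact m)
      * (pochhammer (of_nat L + 1/2) m' * rGamma (of_nat (2*L) + 1 + of_nat m') * rGamma ((of_nat L - \<mu> + 1) + of_nat m') * z^m' / fact m'))
     = Tf z \<mu> (L, L+m, L+m')"
proof -
  define P where "P = pochhammer (1/2::complex) L"
  have f2: "fact (2*L) = (4::complex)^L * P * fact L" unfolding P_def by (rule fact2)
  have P0: "P \<noteq> 0"
  proof
    assume "P = 0"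
    then have "fact (2*L) = (0::complex)" using f2 by simp
    then show False by simp
  qed
  have G: "Gamma (of_nat (2*L + 1) :: complex) = 4^L * P * fact L"
    using Gamma_fact[of "2*L", where 'a=complex] f2 by (simp add: add.commute)
  have poch1: "pochhammer (of_nat L + 1/2) j = pochhammer (1/2) (L+j) / P" for j
    using pochhammer_product'[of "1/2::complex" L j] P0 unfolding P_def by (simp add: add.commute)
  have rg1: "rGamma (of_nat (2*L) + 1 + of_nat j :: complex) = inverse (fact (2*L+j))" for j
    using rG_nat[of "2*L+j"] by (simp add: add_ac)
  have r1: "rGamma ((of_nat L + \<mu> + 1) + of_nat j) = rGamma (of_nat (L+j) + 1 + \<mu>)" for j
    by (simp add: add_ac)
  have r2: "rGamma ((of_nat L - \<mu> + 1) + of_nat j) = rGamma (of_nat (L+j) + 1 + (-\<mu>))" for j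
    by (rule arg_cong[where f=rGamma]) (simp add: algebra_simps)
  have k4: "k ^ (4*L) = 16^L * (z^L * z^L)"
  proof -
    have "z^L * z^L = (z^2)^L" by (simp add: power_mult_distrib[symmetric] power2_eq_square)
    also have "z^2 = k^4 / 16"
    proof -
      have "z^2 = (k^2)^2 / 16" unfolding zdef by (simp add: power_divide)
      also have "(k^2)^2 = k^4" by (simp flip: power_mult)
      finally show ?thesis .
    qed
    finally have "z^L * z^L = (k^4/16)^L" .
    then show ?thesis by (simp add: power_divide power_mult)
  qed
  have m1: "(-1::complex) ^ (2*L) = 1" by simp
  have p8: "(2::complex) ^ (8*L) = 16^L * 4^L * 4^L"
  proof -
    have a1: "(2::complex)^(8*L) = (2^8)^L" by (simp add: power_mult)
    have a2: "(16::complex)^L * 4^L * 4^L = (16*4*4)^L" by (simp only: power_mult_distrib)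
    have a3: "(2::complex)^8 = 16*4*4" by simp
    show ?thesis unfolding a1 a2 a3 ..
  qed
  have d: "(2 - (if L = 0 then 1 else 0)) = (if L = 0 then 1 else 2 :: complex)" by simp
  have T: "Tf z \<mu> (L, L+m, L+m') = (if L = 0 then 1 else 2) / (fact (2*L+m) * fact (2*L+m') * fact m * fact m')
      * (pochhammer (1/2) (L+m) * rGamma (of_nat (L+m) + 1 + \<mu>) * (z^L * z^m))
      * (pochhammer (1/2) (L+m') * rGamma (of_nat (L+m') + 1 + (-\<mu>)) * (z^L * z^m'))"
    by (simp add: Tf_def Dc_def Pf_def power_add mult_2 add_ac)
  show ?thesis
    unfolding T m1 G p8 d poch1 rg1 r1 r2 k4
    using P0 by (simp add: field_simps power2_eq_square)
qed


lemma abs_has_sum_suminf: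
  fixes f :: "nat \<Rightarrow> complex"
  assumes "(\<lambda>m. norm (f m)) summable_on UNIV"
  shows "(f has_sum suminf f) UNIV"
proof -
  have s: "f summable_on UNIV" using assms by (rule Infinite_Sum.abs_summable_summable)
  have h: "(f has_sum infsum f UNIV) UNIV" using s by (rule has_sum_infsum)
  then have "f sums infsum f UNIV" by (rule has_sum_imp_sums)
  then have "infsum f UNIV = suminf f" by (rule sums_unique)
  then show ?thesis using h by simp
qed

lemma per_L:
  fixes k \<mu> :: complex
  shows "((\<lambda>pq. Tf (-(k^2)/4) \<mu> (L,pq)) has_sum ((-1) ^ (2*L) * k ^ (4*L) * (Gamma (of_nat (2*L + 1))) ^ 2
            * (1 / 2 ^ (8*L)) * (2 - (if L = 0 then 1 else 0)) / (fact L) ^ 2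
            * hyper_reg [of_nat L + 1/2] [of_nat (2*L) + 1, of_nat L + \<mu> + 1] (- (k^2) / 4)
            * hyper_reg [of_nat L + 1/2] [of_nat (2*L) + 1, of_nat L - \<mu> + 1] (- (k^2) / 4))) UNIV"
proof -
  define z :: complex where "z = -(k^2)/4"
  define cL :: complex where "cL = (-1) ^ (2*L) * k ^ (4*L) * (Gamma (of_nat (2*L + 1))) ^ 2
            * (1 / 2 ^ (8*L)) * (2 - (if L = 0 then 1 else 0)) / (fact L) ^ 2"
  define a where "a b m = pochhammer (of_nat L + 1/2) m * rGamma (of_nat (2*L) + 1 + of_nat m) * rGamma (b + of_nat m) * z^m / fact m" for b m
  define b1 :: complex where "b1 = of_nat L + \<mu> + 1"
  define b2 :: complex where "b2 = of_nat L - \<mu> + 1"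
  have hr: "hyper_reg [of_nat L + 1/2] [of_nat (2*L) + 1, b] z = suminf (a b)" for b
    unfolding hyper_reg_def a_def by (simp add: mult_ac)
  obtain M1 where M1: "\<forall>n. norm (rGamma (of_nat n + (1+\<mu>))) \<le> M1" using rG_bounded by blast
  obtain M2 where M2: "\<forall>n. norm (rGamma (of_nat n + (1-\<mu>))) \<le> M2" using rG_bounded by blast
  have A1: "(\<lambda>m. norm (a b1 m)) summable_on UNIV"
    unfolding a_def by (rule a_norm_summable[OF M1]) (simp add: b1_def add_ac)
  have A2: "(\<lambda>m. norm (a b2 m)) summable_on UNIV"
    unfolding a_def by (rule a_norm_summable[OF M2]) (simp add: b2_def algebra_simps)
  have h1: "(a b1 has_sum suminf (a b1)) UNIV" by (rule abs_has_sum_suminf[OF A1])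
  have h2: "(a b2 has_sum suminf (a b2)) UNIV" by (rule abs_has_sum_suminf[OF A2])
  have prodsum: "((\<lambda>(m,m'). a b1 m * a b2 m') has_sum (suminf (a b1) * suminf (a b2))) (UNIV \<times> UNIV)"
  proof (rule has_sum_SigmaI[where g = "\<lambda>m. a b1 m * suminf (a b2)"])
    fix m :: nat
    show "((\<lambda>y. (\<lambda>(m,m'). a b1 m * a b2 m') (m, y)) has_sum a b1 m * suminf (a b2)) UNIV"
      using has_sum_cmult_right[OF h2, of "a b1 m"] by simp
  next
    show "((\<lambda>m. a b1 m * suminf (a b2)) has_sum suminf (a b1) * suminf (a b2)) UNIV"
      by (rule has_sum_cmult_left[OF h1])
  next
    have "(\<lambda>(x,y). norm (a b1 x) * norm (a b2 y)) summable_on UNIV \<times> UNIV"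
      by (rule prod_summable[OF _ _ A1 A2]) auto
    then have "(\<lambda>xy. norm ((\<lambda>(m,m'). a b1 m * a b2 m') xy)) summable_on UNIV \<times> UNIV"
      by (simp add: case_prod_unfold norm_mult)
    then show "(\<lambda>(m,m'). a b1 m * a b2 m') summable_on UNIV \<times> UNIV"
      by (rule Infinite_Sum.abs_summable_summable)
  qed
  have cs: "((\<lambda>x. cL * (\<lambda>(m,m'). a b1 m * a b2 m') x) has_sum cL * (suminf (a b1) * suminf (a b2))) (UNIV \<times> UNIV)"
    by (rule has_sum_cmult_right[OF prodsum])
  define h where "h = (\<lambda>(m::nat,m'::nat). (L+m, L+m'))"
  have inj: "inj_on h (UNIV \<times> UNIV)" unfolding h_def by (auto simp: inj_on_def)
  have eqf: "(\<lambda>x. cL * (\<lambda>(m,m'). a b1 m * a b2 m') x) = (\<lambda>pq. Tf z \<mu> (L,pq)) \<circ> h"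
  proof
    fix x :: "nat \<times> nat"
    obtain m m' where x: "x = (m,m')" by (cases x) auto
    show "cL * (\<lambda>(m,m'). a b1 m * a b2 m') x = ((\<lambda>pq. Tf z \<mu> (L,pq)) \<circ> h) x"
      unfolding x h_def cL_def a_def b1_def b2_def
      using key_alg[where z=z and k=k and L=L and \<mu>=\<mu> and m=m and m'=m'] z_def by simp
  qed
  have hs1: "((\<lambda>pq. Tf z \<mu> (L,pq)) has_sum cL * (suminf (a b1) * suminf (a b2))) (h ` (UNIV \<times> UNIV))"
    using cs unfolding eqf by (subst has_sum_reindex[OF inj])
  have hs2: "((\<lambda>pq. Tf z \<mu> (L,pq)) has_sum cL * (suminf (a b1) * suminf (a b2))) UNIV"
  proof -
    have "((\<lambda>pq. Tf z \<mu> (L,pq)) has_sum cL * (suminf (a b1) * suminf (a b2))) (h ` (UNIV \<times> UNIV))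
       \<longleftrightarrow> ((\<lambda>pq. Tf z \<mu> (L,pq)) has_sum cL * (suminf (a b1) * suminf (a b2))) UNIV"
    proof (rule has_sum_cong_neutral)
      fix x :: "nat \<times> nat"
      assume "x \<in> UNIV - h ` (UNIV \<times> UNIV)"
      then obtain p q where x: "x = (p,q)" and nin: "(p,q) \<notin> h ` (UNIV \<times> UNIV)" by (cases x) auto
      have "\<not> (L \<le> p \<and> L \<le> q)"
      proof
        assume "L \<le> p \<and> L \<le> q"
        then have "(p,q) = h (p - L, q - L)" unfolding h_def by auto
        then show False using nin by blast
      qed
      then have "Dc L p q = 0" unfolding Dc_def by auto
      then show "Tf z \<mu> (L, x) = 0" unfolding x by (simp add: Tf_def)
    qed auto
    then show ?thesis using hs1 by simp
  qed
  have e1: "hyper_reg [of_nat L + 1/2] [of_nat (2*L) + 1, of_nat L + \<mu> + 1] (- (k^2) / 4) = suminf (a b1)"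
    using hr[of b1] unfolding b1_def z_def .
  have e2: "hyper_reg [of_nat L + 1/2] [of_nat (2*L) + 1, of_nat L - \<mu> + 1] (- (k^2) / 4) = suminf (a b2)"
    using hr[of b2] unfolding b2_def z_def .
  have fin: "(-1) ^ (2*L) * k ^ (4*L) * (Gamma (of_nat (2*L + 1))) ^ 2
            * (1 / 2 ^ (8*L)) * (2 - (if L = 0 then 1 else 0)) / (fact L) ^ 2
            * hyper_reg [of_nat L + 1/2] [of_nat (2*L) + 1, of_nat L + \<mu> + 1] (- (k^2) / 4)
            * hyper_reg [of_nat L + 1/2] [of_nat (2*L) + 1, of_nat L - \<mu> + 1] (- (k^2) / 4)
         = cL * (suminf (a b1) * suminf (a b2))"
    unfolding e1 e2 cL_def by (rule mult.assoc)
  show ?thesis unfolding fin using hs2 unfolding z_def .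
qed


lemma perN:
  fixes k \<mu> :: complex
  shows "(\<Sum>p\<le>N. of_nat ((2*p+2*(N-p)) choose (p+(N-p))) / (fact (2*p) * fact (2*(N-p))) * Pf (-(k^2)/4) \<mu> p * Pf (-(k^2)/4) (-\<mu>) (N-p))
   = (\<Prod>a\<leftarrow>[1/2,1/2]. pochhammer a N) * (\<Prod>b\<leftarrow>[1, 1-\<mu>, \<mu>+1]. rGamma (b + of_nat N)) * (-(k^2))^N / fact N"
proof -
  define z :: complex where "z = -(k^2)/4"
  define C :: complex where "C = of_nat ((2*N) choose N)"
  have pn0: "pochhammer (1/2::complex) n \<noteq> 0" for n
  proof
    assume "pochhammer (1/2::complex) n = 0"
    then have "fact (2*n) = (0::complex)" using fact2[of n] by simp
    then show False by simp
  qed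
  have trm: "of_nat ((2*p+2*(N-p)) choose (p+(N-p))) / (fact (2*p) * fact (2*(N-p))) * Pf z \<mu> p * Pf z (-\<mu>) (N-p)
      = C * (z^N / 4^N) * (rGamma (of_nat p + 1 + \<mu>) * rGamma (of_nat (N-p) + 1 + (-\<mu>)) / (fact p * fact (N-p)))"
    if "p \<in> {..N}" for p
  proof -
    have pN: "p \<le> N" using that by simp
    have e1: "2*p+2*(N-p) = 2*N" "p+(N-p) = N" using pN by auto
    have zN: "z^N = z^p * z^(N-p)" "(4::complex)^N = 4^p * 4^(N-p)"
      using pN by (simp_all flip: power_add)
    show ?thesis unfolding e1 zN C_def Pf_def fact2[of p] fact2[of "N-p"]
      using pn0[of p] pn0[of "N-p"] by (simp add: field_simps)
  qed
  have "(\<Sum>p\<le>N. of_nat ((2*p+2*(N-p)) choose (p+(N-p))) / (fact (2*p) * fact (2*(N-p))) * Pf z \<mu> p * Pf z (-\<mu>) (N-p))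
      = (\<Sum>p\<le>N. C * (z^N / 4^N) * (rGamma (of_nat p + 1 + \<mu>) * rGamma (of_nat (N-p) + 1 + (-\<mu>)) / (fact p * fact (N-p))))"
    by (rule sum.cong[OF refl trm])
  also have "\<dots> = C * (z^N / 4^N) * (\<Sum>p\<le>N. rGamma (of_nat p + 1 + \<mu>) * rGamma (of_nat (N-p) + 1 + (-\<mu>)) / (fact p * fact (N-p)))"
    by (simp only: sum_distrib_left)
  also have "\<dots> = C * (z^N / 4^N) * (C * rGamma (of_nat N + 1 + \<mu>) * rGamma (of_nat N + 1 + (-\<mu>)))"
    unfolding vandB C_def ..
  also have "\<dots> = (\<Prod>a\<leftarrow>[1/2,1/2]. pochhammer a N) * (\<Prod>b\<leftarrow>[1, 1-\<mu>, \<mu>+1]. rGamma (b + of_nat N)) * (-(k^2))^N / fact N"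
  proof -
    have PN: "pochhammer (1/2::complex) N = fact (2*N) / (4^N * fact N)"
      using fact2[of N] by (simp add: field_simps)
    have CN: "C = fact (2*N) / (fact N * fact N)"
      unfolding C_def using binomial_fact[of N "2*N", where 'a=complex] by (simp add: mult_2)
    have R1: "rGamma (1 + of_nat N :: complex) = inverse (fact N)"
      using rG_nat[of N] by (simp add: add.commute)
    have R2: "rGamma (1 - \<mu> + of_nat N) = rGamma (of_nat N + 1 + (-\<mu>))"
      by (rule arg_cong[where f=rGamma]) (simp add: algebra_simps)
    have R3: "rGamma (\<mu> + 1 + of_nat N) = rGamma (of_nat N + 1 + \<mu>)"
      by (rule arg_cong[where f=rGamma]) (simp add: algebra_simps)
    have K: "(-(k^2))^N = (4::complex)^N * z^N"
      unfolding z_def by (simp flip: power_mult_distrib)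
    show ?thesis
      apply (simp only: list.map prod_list.Cons prod_list.Nil mult_1_right R1 R2 R3 K PN CN)
      apply (simp add: field_simps)
      done
  qed
  finally show ?thesis unfolding z_def .
qed

theorem mainTheorem2:
  fixes k \<mu> :: complex
  shows "(\<lambda>L::nat. (-1) ^ (2*L) * k ^ (4*L) * (Gamma (of_nat (2*L + 1))) ^ 2
            * (1 / 2 ^ (8*L)) * (2 - (if L = 0 then 1 else 0)) / (fact L) ^ 2
            * hyper_reg [of_nat L + 1/2] [of_nat (2*L) + 1, of_nat L + \<mu> + 1] (- (k^2) / 4)
            * hyper_reg [of_nat L + 1/2] [of_nat (2*L) + 1, of_nat L - \<mu> + 1] (- (k^2) / 4))
         sums hyper_reg [1/2, 1/2] [1, 1 - \<mu>, \<mu> + 1] (- (k^2))"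
proof -
  define z :: complex where "z = - (k^2) / 4"
  define S where "S = infsum (Tf z \<mu>) UNIV"
  have hT: "(Tf z \<mu> has_sum S) (UNIV \<times> UNIV)"
    using has_sum_infsum[OF T_summable[of z \<mu>]] unfolding S_def by simp
  have hf: "((\<lambda>L::nat. (-1) ^ (2*L) * k ^ (4*L) * (Gamma (of_nat (2*L + 1))) ^ 2
            * (1 / 2 ^ (8*L)) * (2 - (if L = 0 then 1 else 0)) / (fact L) ^ 2
            * hyper_reg [of_nat L + 1/2] [of_nat (2*L) + 1, of_nat L + \<mu> + 1] (- (k^2) / 4)
            * hyper_reg [of_nat L + 1/2] [of_nat (2*L) + 1, of_nat L - \<mu> + 1] (- (k^2) / 4)) has_sum S) UNIV"
  proof (rule has_sum_SigmaD[OF hT])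
    fix L :: nat
    show "((\<lambda>y. Tf z \<mu> (L, y)) has_sum ((-1) ^ (2*L) * k ^ (4*L) * (Gamma (of_nat (2*L + 1))) ^ 2
            * (1 / 2 ^ (8*L)) * (2 - (if L = 0 then 1 else 0)) / (fact L) ^ 2
            * hyper_reg [of_nat L + 1/2] [of_nat (2*L) + 1, of_nat L + \<mu> + 1] (- (k^2) / 4)
            * hyper_reg [of_nat L + 1/2] [of_nat (2*L) + 1, of_nat L - \<mu> + 1] (- (k^2) / 4))) UNIV"
      using per_L[of k \<mu> L] unfolding z_def .
  qed
  have hT2: "((\<lambda>(x,y). Tf z \<mu> (y,x)) has_sum S) (UNIV \<times> UNIV)"
    using hT by (subst (asm) has_sum_swap)
  define G where "G = (\<lambda>(p,q). (\<Sum>L\<le>p+q. Dc L p q) * Pf z \<mu> p * Pf z (-\<mu>) q)"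
  have hG: "(G has_sum S) UNIV"
  proof (rule has_sum_SigmaD[OF hT2])
    fix pq :: "nat \<times> nat"
    obtain p q where pq: "pq = (p,q)" by (cases pq) auto
    have fin: "((\<lambda>L. Tf z \<mu> (L,p,q)) has_sum (\<Sum>L\<le>p+q. Tf z \<mu> (L,p,q))) {..p+q}"
      by (rule has_sum_finite) simp
    have "((\<lambda>L. Tf z \<mu> (L,p,q)) has_sum (\<Sum>L\<le>p+q. Tf z \<mu> (L,p,q))) {..p+q}
        \<longleftrightarrow> ((\<lambda>L. Tf z \<mu> (L,p,q)) has_sum (\<Sum>L\<le>p+q. Tf z \<mu> (L,p,q))) UNIV"
    proof (rule has_sum_cong_neutral)
      fix L assume "L \<in> UNIV - {..p+q}"
      then have "Dc L p q = 0" unfolding Dc_def by auto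
      then show "Tf z \<mu> (L,p,q) = 0" by (simp add: Tf_def)
    qed auto
    moreover have "(\<Sum>L\<le>p+q. Tf z \<mu> (L,p,q)) = G pq"
      unfolding G_def pq Tf_def by (simp add: sum_distrib_right)
    ultimately show "((\<lambda>y. (\<lambda>(x,y). Tf z \<mu> (y,x)) (pq, y)) has_sum G pq) UNIV"
      using fin unfolding pq by simp
  qed
  have bij: "bij_betw (\<lambda>(N::nat,p::nat). (p, N-p)) (Sigma UNIV (\<lambda>N. {..N})) UNIV"
    by (rule bij_betw_byWitness[where f' = "\<lambda>(p,q). (p+q, p)"]) auto
  have hG2: "((\<lambda>x. G ((\<lambda>(N,p). (p, N-p)) x)) has_sum S) (Sigma UNIV (\<lambda>N. {..N}))"
    using has_sum_reindex_bij_betw[OF bij, of G S] hG by simp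
  have hN: "((\<lambda>N. \<Sum>p\<le>N. G (p, N-p)) has_sum S) UNIV"
  proof (rule has_sum_SigmaD[OF hG2])
    fix N :: nat
    show "((\<lambda>y. G ((\<lambda>(N,p). (p, N-p)) (N, y))) has_sum (\<Sum>p\<le>N. G (p, N-p))) {..N}"
      by simp
  qed
  have eqN: "(\<Sum>p\<le>N. G (p, N-p)) = (\<Prod>a\<leftarrow>[1/2,1/2]. pochhammer a N) * (\<Prod>b\<leftarrow>[1, 1-\<mu>, \<mu>+1]. rGamma (b + of_nat N)) * (-(k^2))^N / fact N" for N
    unfolding G_def using perN[of N k \<mu>] unfolding z_def[symmetric] by (simp add: Dc_sum)
  have "(\<lambda>N. (\<Prod>a\<leftarrow>[1/2,1/2]. pochhammer a N) * (\<Prod>b\<leftarrow>[1, 1-\<mu>, \<mu>+1]. rGamma (b + of_nat N)) * (-(k^2))^N / fact N) sums S"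
    using has_sum_imp_sums[OF hN] unfolding eqN .
  then have "S = hyper_reg [1/2, 1/2] [1, 1 - \<mu>, \<mu> + 1] (- (k^2))"
    unfolding hyper_reg_def by (rule sums_unique)
  then show ?thesis using has_sum_imp_sums[OF hf] by simp
qed


end
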